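(* For every positive integer $k$, $$E_{2k}\left(\tau+\tfrac{1}{2}\right)=-E_{2k}(\tau)+(2^{2k}+2)E_{2k}(2\tau)-2^{2k}E_{2k}(4\tau).$$ For $p=3$ or $11$ and every integer $k\ge0$, \begin{align*} E_{2k+1}^{0}\left(\tau+\tfrac{1}{2};\chi_{p}\right)&=-E_{2k+1}^{0}(\tau;\chi_{p})+(2^{2k+1}-2)E_{2k+1}^{0}(2\tau;\chi_{p})+2^{2k+1}E_{2k+1}^{0}(4\tau;\chi_{p}),\\ E_{2k+1}^{\infty}\left(\tau+\tfrac{1}{2};\chi_{p}\right)&=-E_{2k+1}^{\infty}(\tau;\chi_{p})+(2-2^{2k+1})E_{2k+1}^{\infty}(2\tau;\chi_{p})+2^{2k+1}E_{2k+1}^{\infty}(4\tau;\chi_{p}). \end{align*} For $p=7$ or $23$ and every integer $k\ge0$, \begin{align*} E_{2k+1}^{0}\left(\tau+\tfrac{1}{2};\chi_{p}\right)&=-E_{2k+1}^{0}(\tau;\chi_{p})+(2^{2k+1}+2)E_{2k+1}^{0}(2\tau;\chi_{p})-2^{2k+1}E_{2k+1}^{0}(4\tau;\chi_{p}),\\ E_{2k+1}^{\infty}\left(\tau+\tfrac{1}{2};\chi_{p}\right)&=-E_{2k+1}^{\infty}(\tau;\chi_{p})+(2^{2k+1}+2)E_{2k+1}^{\infty}(2\tau;\chi_{p})-2^{2k+1}E_{2k+1}^{\infty}(4\tau;\chi_{p}). \end{align*}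
   Context: $\tau$ lies in the complex upper half-plane and $q=e^{2\pi i\tau}$. Bernoulli numbers $\mathcal{B}_k$: $\frac{u}{e^u-1}=\sum_{k\ge0}\mathcal{B}_k\frac{u^k}{k!}$. For $k\ge1$, $E_{2k}(\tau)=1-\frac{4k}{\mathcal{B}_{2k}}\sum_{j=1}^{\infty}\frac{j^{2k-1}q^{j}}{1-q^{j}}$. For an odd prime $p$ let $\chi_p(j)=\left(\frac{j}{p}\right)$ (Legendre symbol), and define generalized Bernoulli numbers $\mathcal{B}_{k,p}$ by $\frac{x}{e^{px}-1}\sum_{j=1}^{p-1}\chi_p(j)e^{jx}=\sum_{k\ge0}\mathcal{B}_{k,p}\frac{x^k}{k!}$. For a positive integer $k$ with $k\equiv\frac{p-1}{2}\pmod 2$ set $$E_{k}^{0}(\tau;\chi_{p})=\delta_{k,1}-\frac{2k}{\mathcal{B}_{k,p}}\sum_{j=1}^{\infty}\frac{j^{k-1}}{1-q^{pj}}\sum_{\ell=1}^{p-1}\left(\frac{\ell}{p}\right)q^{j\ell},\qquad E_{k}^{\infty}(\tau;\chi_{p})=1-\frac{2k}{\mathcal{B}_{k,p}}\sum_{j=1}^{\infty}\left(\frac{j}{p}\right)\frac{j^{k-1}q^{j}}{1-q^{j}},$$ with $\delta$ the Kronecker delta. (For $p\in\{3,7,11,23\}$, $\frac{p-1}{2}$ is odd, so these are defined for all odd $k$.) *)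

theory Defs
  imports "HOL-Analysis.Analysis" "HOL-Number_Theory.Number_Theory"
    "HOL-Computational_Algebra.Formal_Power_Series"
begin

definition qq :: "complex \<Rightarrow> complex" where
  "qq \<tau> = exp (2 * of_real pi * \<i> * \<tau>)"

definition bern :: "nat \<Rightarrow> real" where
  "bern k = fact k * fps_nth (fps_X div (fps_exp 1 - 1)) k"

definition chi :: "nat \<Rightarrow> int \<Rightarrow> real" where
  "chi p j = of_int (Legendre j (int p))"

text \<open>Generalized Bernoulli numbers:
  x/(e^(px) - 1) * sum_{j=1}^{p-1} chi_p(j) e^(jx) = sum B_{k,p} x^k/k!\<close>
definition bern_chi :: "nat \<Rightarrow> nat \<Rightarrow> real" where
  "bern_chi k p = fact k * fps_nth
     ((fps_X div (fps_exp (real p) - 1)) *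
      (\<Sum>j=1..p-1. fps_const (chi p (int j)) * fps_exp (real j))) k"

definition eis :: "nat \<Rightarrow> complex \<Rightarrow> complex" where
  "eis w \<tau> = 1 - (2 * of_nat w / of_real (bern w)) *
     (\<Sum>j. of_nat (Suc j) ^ (w - 1) * qq \<tau> ^ Suc j / (1 - qq \<tau> ^ Suc j))"

definition eis0 :: "nat \<Rightarrow> nat \<Rightarrow> complex \<Rightarrow> complex" where
  "eis0 p k \<tau> = (if k = 1 then 1 else 0) - (2 * of_nat k / of_real (bern_chi k p)) *
     (\<Sum>j. of_nat (Suc j) ^ (k - 1) / (1 - qq \<tau> ^ (p * Suc j)) *
        (\<Sum>l=1..p-1. of_real (chi p (int l)) * qq \<tau> ^ (Suc j * l)))"

definition eisinf :: "nat \<Rightarrow> nat \<Rightarrow> complex \<Rightarrow> complex" where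
  "eisinf p k \<tau> = 1 - (2 * of_nat k / of_real (bern_chi k p)) *
     (\<Sum>j. of_real (chi p (int (Suc j))) * of_nat (Suc j) ^ (k - 1) * qq \<tau> ^ Suc j
            / (1 - qq \<tau> ^ Suc j))"

end

theory Submission
  imports Defs
begin

lemma Legendre_range: "Legendre a p \<in> {-1,0,1}"
  by (simp add: Legendre_def)

lemma Legendre_compute:
  assumes "prime p" "2 < p"
  shows "Legendre a (int p) = (let r = a ^ ((p - 1) div 2) mod int p in if r = 0 then 0 else if r = 1 then 1 else -1)"
proof -
  have c: "Legendre a (int p) mod int p = a ^ ((p - 1) div 2) mod int p"
    using euler_criterion[OF assms, of a] by (simp add: cong_def)
  have p2: "int p > 2" using assms by simp
  consider "Legendre a (int p) = -1" | "Legendre a (int p) = 0" | "Legendre a (int p) = 1"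
    using Legendre_range[of a "int p"] by blast
  then show ?thesis
  proof cases
    case 1
    have "(-1::int) mod int p = int p - 1" using p2 by (simp add: zmod_minus1)
    then show ?thesis using c 1 p2 by (simp add: Let_def)
  next
    case 2 then show ?thesis using c by (simp add: Let_def)
  next
    case 3 then show ?thesis using c p2 by (simp add: Let_def)
  qed
qed

lemma Legendre_mult:
  assumes "prime p" "2 < p"
  shows "Legendre (a*b) (int p) = Legendre a (int p) * Legendre b (int p)"
proof -
  have "[Legendre (a*b) (int p) = (a*b) ^ ((p - 1) div 2)] (mod int p)"
    using euler_criterion[OF assms] by blast
  moreover have "[Legendre a (int p) * Legendre b (int p) = a ^ ((p - 1) div 2) * b ^ ((p - 1) div 2)] (mod int p)"
    using euler_criterion[OF assms] by (blast intro: cong_mult)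
  ultimately have "[Legendre (a*b) (int p) = Legendre a (int p) * Legendre b (int p)] (mod int p)"
    by (metis cong_sym cong_trans power_mult_distrib)
  then have d: "int p dvd (Legendre (a*b) (int p) - Legendre a (int p) * Legendre b (int p))"
    by (simp add: cong_iff_dvd_diff)
  have r: "Legendre (a*b) (int p) \<in> {-1,0,1}" "Legendre a (int p) \<in> {-1,0,1}" "Legendre b (int p) \<in> {-1,0,1}"
    by (rule Legendre_range)+
  define x where "x = Legendre (a*b) (int p) - Legendre a (int p) * Legendre b (int p)"
  have "\<bar>x\<bar> \<le> 2" using r unfolding x_def by auto
  moreover have "int p dvd x" using d x_def by simp
  ultimately have "x = 0" using assms(2) dvd_imp_le_int[of x "int p"] by (cases "x = 0") auto
  then show ?thesis unfolding x_def by simp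
qed

lemma prime23: "prime (23::nat)" by (simp add: prime_nat_iff' atLeastLessThan_upt upt_rec)
lemma prime11: "prime (11::nat)" by (simp add: prime_nat_iff' atLeastLessThan_upt upt_rec)
lemma prime7: "prime (7::nat)" by (simp add: prime_nat_iff' atLeastLessThan_upt upt_rec)
lemma prime3: "prime (3::nat)" by (simp add: prime_nat_iff' atLeastLessThan_upt upt_rec)


lemma chi_compute:
  assumes "prime p" "2 < p"
  shows "chi p a = (let r = a ^ ((p - 1) div 2) mod int p in if r = 0 then 0 else if r = 1 then 1 else -1)"
  unfolding chi_def using Legendre_compute[OF assms, of a] by (simp add: Let_def)

lemma chi2_vals: "chi 3 2 = -1" "chi 11 2 = -1" "chi 7 2 = 1" "chi 23 2 = 1"
  using chi_compute[OF prime3, of 2] chi_compute[OF prime11, of 2]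
    chi_compute[OF prime7, of 2] chi_compute[OF prime23, of 2] by simp_all

lemma chi_mult: "prime p \<Longrightarrow> 2 < p \<Longrightarrow> chi p (a*b) = chi p a * chi p b"
  unfolding chi_def using Legendre_mult by simp

lemma chi_period: "chi p (a + int p) = chi p a"
  unfolding chi_def Legendre_def QuadRes_def cong_def by simp

lemma chi_zero: "chi p 0 = 0"
  unfolding chi_def Legendre_def by simp

lemma chi_abs: "\<bar>chi p a\<bar> \<le> 1"
  unfolding chi_def Legendre_def by simp

lemma key_bij:
  assumes "odd (p::nat)"
  shows "bij_betw (\<lambda>l. if even l then l div 2 else (l + p) div 2) {1..p-1} {1..p-1}"
proof -
  let ?h = "\<lambda>l. if even l then l div 2 else (l + p) div 2"
  have inj: "inj_on ?h {1..p-1}"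
    unfolding inj_on_def using assms by (auto; presburger?)
  have sub: "?h ` {1..p-1} \<subseteq> {1..p-1}"
    using assms by (auto; presburger?)
  have "card (?h ` {1..p-1}) = card {1..p-1::nat}" using card_image[OF inj] .
  then have "?h ` {1..p-1} = {1..p-1}"
    using sub by (simp add: card_subset_eq)
  then show ?thesis using inj by (simp add: bij_betw_def)
qed

lemma key_sum:
  fixes Q :: complex
  assumes "prime p" "2 < p"
  shows "(\<Sum>l=1..p-1. of_real (chi p (int l)) * (-Q)^l) * (1 - Q^p)
         + (\<Sum>l=1..p-1. of_real (chi p (int l)) * Q^l) * (1 + Q^p)
       = 2 * of_real (chi p 2) * (\<Sum>l=1..p-1. of_real (chi p (int l)) * (Q^2)^l)"
proof -
  have oddp: "odd p" using assms prime_odd_nat by auto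
  define h where "h = (\<lambda>l::nat. if even l then l div 2 else (l + p) div 2)"
  define g where "g = (\<lambda>m::nat. of_real (chi p (int (2*m))) * Q^(2*m))"
  have bij: "bij_betw h {1..p-1} {1..p-1}" unfolding h_def by (rule key_bij[OF oddp])
  have t: "of_real (chi p (int l)) * (-Q)^l * (1 - Q^p) + of_real (chi p (int l)) * Q^l * (1 + Q^p)
           = 2 * g (h l)" for l
  proof (cases "even l")
    case True
    then have "2 * (l div 2) = l" by simp
    then show ?thesis using True unfolding g_def h_def by (simp add: algebra_simps)
  next
    case False
    then have e: "2 * ((l + p) div 2) = l + p" using oddp by presburger
    have c: "chi p (int (2 * ((l + p) div 2))) = chi p (int l)" unfolding e using chi_period[of p "int l"] by simp
    have q: "Q^(2 * ((l + p) div 2)) = Q^l * Q^p" unfolding e by (simp add: power_add)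
    have hl: "h l = (l + p) div 2" using False unfolding h_def by simp
    have "g (h l) = of_real (chi p (int l)) * (Q^l * Q^p)" unfolding hl g_def c q ..
    then show ?thesis using False by (simp add: algebra_simps)
  qed
  have "(\<Sum>l=1..p-1. of_real (chi p (int l)) * (-Q)^l) * (1 - Q^p)
         + (\<Sum>l=1..p-1. of_real (chi p (int l)) * Q^l) * (1 + Q^p)
       = (\<Sum>l=1..p-1. 2 * g (h l))"
    by (simp add: sum_distrib_right sum.distrib[symmetric] t)
  also have "\<dots> = 2 * (\<Sum>l=1..p-1. g (h l))" by (simp add: sum_distrib_left)
  also have "(\<Sum>l=1..p-1. g (h l)) = (\<Sum>m=1..p-1. g m)"
    using sum.reindex_bij_betw[OF bij, of g] .
  also have "(\<Sum>m=1..p-1. g m) = of_real (chi p 2) * (\<Sum>l=1..p-1. of_real (chi p (int l)) * (Q^2)^l)"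
    unfolding g_def sum_distrib_left
    by (rule sum.cong) (simp_all add: chi_mult[OF assms, of 2, simplified] power_mult)
  finally show ?thesis by simp
qed


lemma summable_npow:
  assumes "0 \<le> r" "r < 1"
  shows "summable (\<lambda>n. real n ^ s * r ^ n)"
proof -
  have lim: "(\<lambda>n. norm (real n ^ s) / norm (real (Suc n) ^ s)) \<longlonglongrightarrow> 1"
  proof -
    have "(\<lambda>n. (real n / real (Suc n)) ^ s) \<longlonglongrightarrow> 1 ^ s"
      by (intro tendsto_power LIMSEQ_n_over_Suc_n)
    then show ?thesis by (simp add: power_divide)
  qed
  have "conv_radius (\<lambda>n. real n ^ s) = ereal 1"
    by (rule conv_radius_ratio_limit_nonzero[OF refl _ lim]) simp
  then have "summable (\<lambda>n. norm (real n ^ s * r ^ n))"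
    using assms by (intro abs_summable_in_conv_radius) simp
  then show ?thesis using assms by simp
qed

lemma norm_one_minus_pow:
  fixes z :: complex
  assumes "norm z < 1" "m \<ge> 1"
  shows "norm (1 - z^m) \<ge> 1 - norm z"
proof -
  have "norm z ^ m \<le> norm z" using assms
    by (metis less_eq_real_def norm_ge_zero power_decreasing power_one_right)
  moreover have "norm (1 - z^m) \<ge> 1 - norm (z^m)"
    by (metis norm_one norm_triangle_ineq2)
  ultimately show ?thesis by (simp add: norm_power)
qed

lemma nrange_even: "(n::nat) \<notin> range (\<lambda>n. 2*n) \<Longrightarrow> odd n"
proof (rule ccontr)
  assume a: "n \<notin> range (\<lambda>n. 2*n)" "\<not> odd n"
  then have "n = 2*(n div 2)" by simp
  then have "n \<in> range (\<lambda>n. 2*n)" by (rule image_eqI) simp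
  with a show False by simp
qed
lemma nrange_odd: "(n::nat) \<notin> range (\<lambda>n. 2*n+1) \<Longrightarrow> even n"
proof (rule ccontr)
  assume a: "n \<notin> range (\<lambda>n. 2*n+1)" "\<not> even n"
  then have "n = 2*(n div 2) + 1" by simp
  then have "n \<in> range (\<lambda>n. 2*n+1)" by (rule image_eqI) simp
  with a show False by simp
qed
lemma smono_even: "strict_mono (\<lambda>n::nat. 2*n)" by (simp add: strict_mono_def)
lemma smono_odd: "strict_mono (\<lambda>n::nat. 2*n+1)" by (simp add: strict_mono_def)
lemma summable_evenpart: "summable (\<lambda>n. norm (F n)) \<Longrightarrow> summable (\<lambda>n. if even n then norm (F n) else 0)"
  by (rule summable_comparison_test'[where N=0]) auto

lemma even_odd_split:
  fixes F :: "nat \<Rightarrow> complex"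
  assumes S: "summable (\<lambda>n. norm (F n))"
  shows "summable (\<lambda>n. norm (F (2*n)))" "summable (\<lambda>n. norm (F (2*n+1)))"
    "suminf F = (\<Sum>n. F (2*n)) + (\<Sum>n. F (2*n+1))"
proof -
  define G where "G = (\<lambda>n. if even n then norm (F n) else 0)"
  define H where "H = (\<lambda>n. if odd n then norm (F n) else 0)"
  have sG: "summable G"
    by (rule summable_comparison_test'[OF S, where N=0]) (simp add: G_def)
  have sH: "summable H"
    by (rule summable_comparison_test'[OF S, where N=0]) (simp add: H_def)
  have z1: "G n = 0" if "n \<notin> range (\<lambda>n. 2*n)" for n
    using nrange_even[OF that] unfolding G_def by simp
  have z2: "H n = 0" if "n \<notin> range (\<lambda>n. 2*n+1)" for n
    using nrange_odd[OF that] unfolding H_def by simp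
  have "summable (\<lambda>n. G (2*n))"
    using summable_mono_reindex[of "\<lambda>n. 2*n" G, OF smono_even z1] sG by simp
  then show s1: "summable (\<lambda>n. norm (F (2*n)))" by (simp add: G_def)
  have "summable (\<lambda>n. H (2*n+1))"
    using summable_mono_reindex[of "\<lambda>n. 2*n+1" H, OF smono_odd z2] sH by simp
  then show s2: "summable (\<lambda>n. norm (F (2*n+1)))" by (simp add: H_def)
  have g: "(\<lambda>n. sum F {n * 2..<n * 2 + 2}) sums suminf F"
    by (rule sums_group[OF summable_sums[OF summable_norm_cancel[OF S]]]) simp
  have st: "{n * 2..<n * 2 + 2} = {2*n, 2*n+1}" for n :: nat by auto
  have e: "sum F {n * 2..<n * 2 + 2} = F (2*n) + F (2*n+1)" for n
    unfolding st by simp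
  have "(\<lambda>n. F (2*n) + F (2*n+1)) sums suminf F" using g by (simp only: e)
  moreover have "(\<lambda>n. F (2*n) + F (2*n+1)) sums ((\<Sum>n. F (2*n)) + (\<Sum>n. F (2*n+1)))"
    by (rule sums_add[OF summable_sums[OF summable_norm_cancel[OF s1]] summable_sums[OF summable_norm_cancel[OF s2]]])
  ultimately show "suminf F = (\<Sum>n. F (2*n)) + (\<Sum>n. F (2*n+1))"
    by (rule sums_unique2)
qed


lemma split_main:
  fixes A B C D :: "nat \<Rightarrow> complex"
  assumes sA: "summable (\<lambda>n. norm (A n))" and sB: "summable (\<lambda>n. norm (B n))"
    and sC: "summable (\<lambda>n. norm (C n))"
    and DE: "\<And>n. D (2*n) = c * B n" and AE: "\<And>n. A (2*n) = c * B n"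
    and BE: "\<And>n. B (2*n) = c * C n"
    and DO: "\<And>n. D (2*n+1) = - A (2*n+1) + d * B (2*n+1)"
  shows "summable (\<lambda>n. norm (D n))"
    "suminf D = - suminf A + (2*c+d) * suminf B - d * c * suminf C"
proof -
  have bnd: "norm (D n) \<le> norm (A n) + norm d * norm (B n)" for n
  proof (cases "even n")
    case True
    define m where "m = n div 2"
    have m: "n = 2*m" using True unfolding m_def by simp
    show ?thesis unfolding m DE AE[symmetric] by simp
  next
    case False
    define m where "m = n div 2"
    have m: "n = 2*m+1" using False unfolding m_def by simp
    show ?thesis unfolding m DO
      by (metis norm_minus_cancel norm_mult norm_triangle_ineq)
  qed
  show sD: "summable (\<lambda>n. norm (D n))"
    by (rule summable_comparison_test'[OF summable_add[OF sA summable_mult[where c="norm d", OF sB]], where N=0])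
       (simp add: bnd)
  note eA = even_odd_split[OF sA] and eB = even_odd_split[OF sB] and eD = even_odd_split[OF sD]
  have cB: "summable B" "summable C" using summable_norm_cancel[OF sB] summable_norm_cancel[OF sC] .
  have oA: "summable (\<lambda>n. A (2*n+1))" "summable (\<lambda>n. B (2*n+1))"
    using summable_norm_cancel[OF eA(2)] summable_norm_cancel[OF eB(2)] .
  have 1: "(\<Sum>n. D (2*n)) = c * suminf B" unfolding DE by (rule suminf_mult[OF cB(1)])
  have 2: "(\<Sum>n. A (2*n)) = c * suminf B" unfolding AE by (rule suminf_mult[OF cB(1)])
  have 3: "(\<Sum>n. B (2*n)) = c * suminf C" unfolding BE by (rule suminf_mult[OF cB(2)])
  have 4: "(\<Sum>n. D (2*n+1)) = - (\<Sum>n. A (2*n+1)) + d * (\<Sum>n. B (2*n+1))"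
  proof -
    have "(\<lambda>n. - A (2*n+1) + d * B (2*n+1)) sums (- (\<Sum>n. A (2*n+1)) + d * (\<Sum>n. B (2*n+1)))"
      by (rule sums_add[OF sums_minus[OF summable_sums[OF oA(1)]] sums_mult[OF summable_sums[OF oA(2)]]])
    then show ?thesis unfolding DO by (rule sums_unique[symmetric])
  qed
  show "suminf D = - suminf A + (2*c+d) * suminf B - d * c * suminf C"
    unfolding eD(3) eA(3) eB(3) 1 2 3 4 by (simp add: algebra_simps)
qed


definition TE :: "nat \<Rightarrow> complex \<Rightarrow> nat \<Rightarrow> complex" where
  "TE s q n = of_nat n ^ s * q ^ n / (1 - q ^ n)"
definition TI :: "nat \<Rightarrow> nat \<Rightarrow> complex \<Rightarrow> nat \<Rightarrow> complex" where
  "TI p s q n = of_real (chi p (int n)) * of_nat n ^ s * q ^ n / (1 - q ^ n)"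
definition YY :: "nat \<Rightarrow> complex \<Rightarrow> complex" where
  "YY p z = (\<Sum>l=1..p-1. of_real (chi p (int l)) * z^l) / (1 - z^p)"
definition T0 :: "nat \<Rightarrow> nat \<Rightarrow> complex \<Rightarrow> nat \<Rightarrow> complex" where
  "T0 p s q n = of_nat n ^ s / (1 - q ^ (p * n)) * (\<Sum>l=1..p-1. of_real (chi p (int l)) * q ^ (n * l))"

lemma T0_YY: "T0 p s q n = of_nat n ^ s * YY p (q^n)"
proof -
  have a: "q ^ (p * n) = (q^n)^p" by (metis power_mult mult.commute)
  have b: "q ^ (n * l) = (q^n)^l" for l by (simp add: power_mult)
  show ?thesis unfolding T0_def YY_def a b by simp
qed

lemma div_bound:
  fixes q a :: complex
  assumes "norm q < 1" "m \<ge> 1"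
  shows "norm (a / (1 - q^m)) \<le> norm a / (1 - norm q)"
proof -
  have b: "norm (1 - q^m) \<ge> 1 - norm q" by (rule norm_one_minus_pow[OF assms])
  have "0 < 1 - norm q" using assms by simp
  then show ?thesis using b unfolding norm_divide
    by (intro frac_le) simp_all
qed

lemma summable_bound:
  fixes f :: "nat \<Rightarrow> complex"
  assumes "norm q < 1" "\<And>n. norm (f n) \<le> M * (real n ^ s * norm q ^ n)"
  shows "summable (\<lambda>n. norm (f n))"
  by (rule summable_comparison_test'[where N=0, OF summable_mult[OF summable_npow[of "norm q" s]]])
     (use assms in auto)

lemma TE_summable:
  assumes "norm q < 1"
  shows "summable (\<lambda>n. norm (TE s q n))"
proof (rule summable_bound[OF assms, where M="1/(1 - norm q)"])
  fix n
  show "norm (TE s q n) \<le> 1/(1 - norm q) * (real n ^ s * norm q ^ n)"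
  proof (cases "n = 0")
    case True then show ?thesis using assms by (auto simp: TE_def intro!: divide_nonneg_pos)
  next
    case False
    then have "norm (TE s q n) \<le> norm (of_nat n ^ s * q ^ n) / (1 - norm q)"
      unfolding TE_def using div_bound[OF assms] by simp
    then show ?thesis by (simp add: norm_mult norm_power)
  qed
qed

lemma TI_summable:
  assumes "norm q < 1"
  shows "summable (\<lambda>n. norm (TI p s q n))"
proof (rule summable_bound[OF assms, where M="1/(1 - norm q)"])
  fix n
  show "norm (TI p s q n) \<le> 1/(1 - norm q) * (real n ^ s * norm q ^ n)"
  proof (cases "n = 0")
    case True then show ?thesis using assms by (auto simp: TI_def intro!: divide_nonneg_pos)
  next
    case False
    then have "norm (TI p s q n) \<le> norm (of_real (chi p (int n)) * of_nat n ^ s * q ^ n) / (1 - norm q)"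
      unfolding TI_def using div_bound[OF assms] by simp
    also have "\<dots> \<le> (real n ^ s * norm q ^ n) / (1 - norm q)"
    proof (rule divide_right_mono)
      have "norm (of_real (chi p (int n)) :: complex) \<le> 1" using chi_abs[of p "int n"] by simp
      then have "norm (of_real (chi p (int n)) :: complex) * (real n ^ s * norm q ^ n) \<le> 1 * (real n ^ s * norm q ^ n)"
        by (intro mult_right_mono) simp_all
      then show "norm (of_real (chi p (int n)) * of_nat n ^ s * q ^ n) \<le> real n ^ s * norm q ^ n"
        by (simp add: norm_mult norm_power mult.assoc)
    qed (use assms in simp)
    finally show ?thesis by simp
  qed
qed

lemma T0_summable:
  assumes "norm q < 1" "p \<ge> 1"
  shows "summable (\<lambda>n. norm (T0 p s q n))"
proof (rule summable_bound[OF assms(1), where M="real (p-1)/(1 - norm q)"])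
  fix n
  show "norm (T0 p s q n) \<le> real (p-1)/(1 - norm q) * (real n ^ s * norm q ^ n)"
  proof (cases "n = 0")
    case True then show ?thesis using assms by (auto simp: T0_def intro!: divide_nonneg_pos)
  next
    case False
    have sb: "norm (\<Sum>l=1..p-1. of_real (chi p (int l)) * q ^ (n * l)) \<le> real (p-1) * norm q ^ n"
    proof -
      have "norm (\<Sum>l=1..p-1. of_real (chi p (int l)) * q ^ (n * l)) \<le> (\<Sum>l=1..p-1. norm (of_real (chi p (int l)) * q ^ (n * l)))"
        by (rule norm_sum)
      also have "\<dots> \<le> (\<Sum>l=1..p-1. norm q ^ n)"
      proof (rule sum_mono)
        fix l assume l: "l \<in> {1..p-1}"
        have c: "norm (of_real (chi p (int l)) :: complex) \<le> 1" using chi_abs[of p "int l"] by simp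
        have "norm q ^ (n * l) \<le> norm q ^ n"
          using l assms(1) by (intro power_decreasing) auto
        moreover have "norm (of_real (chi p (int l)) :: complex) * norm q ^ (n * l) \<le> 1 * norm q ^ (n * l)"
          using c by (intro mult_right_mono) simp_all
        ultimately show "norm (of_real (chi p (int l)) * q ^ (n * l)) \<le> norm q ^ n"
          by (simp add: norm_mult norm_power)
      qed
      also have "\<dots> = real (p-1) * norm q ^ n" by simp
      finally show ?thesis .
    qed
    have "p * n \<ge> 1" using False assms(2) by simp
    have "norm (T0 p s q n) = norm (of_nat n ^ s * (\<Sum>l=1..p-1. of_real (chi p (int l)) * q ^ (n * l)) / (1 - q ^ (p * n)))"
      unfolding T0_def by simp
    also have "\<dots> \<le> norm (of_nat n ^ s * (\<Sum>l=1..p-1. of_real (chi p (int l)) * q ^ (n * l))) / (1 - norm q)"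
      by (rule div_bound[OF assms(1) \<open>p * n \<ge> 1\<close>])
    also have "\<dots> \<le> (real n ^ s * (real (p-1) * norm q ^ n)) / (1 - norm q)"
      using sb assms(1) by (intro divide_right_mono) (auto simp: norm_mult norm_power intro: mult_left_mono)
    finally show ?thesis by (simp add: mult.left_commute)
  qed
qed


lemma shift_sum:
  fixes f :: "nat \<Rightarrow> complex"
  assumes "summable (\<lambda>n. norm (f n))" "f 0 = 0"
  shows "(\<Sum>j. f (Suc j)) = suminf f"
  using suminf_split_head[OF summable_norm_cancel[OF assms(1)]] assms(2) by simp

lemma lambert_id:
  fixes x a :: complex
  assumes "norm x < 1"
  shows "a * (-x) / (1 - (-x)) = - (a * x / (1 - x)) + 2 * (a * x^2 / (1 - x^2))"
proof -
  have h1: "1 - x \<noteq> 0"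
  proof
    assume "1 - x = 0" then have "x = 1" by simp
    with assms show False by simp
  qed
  have h2: "1 + x \<noteq> 0"
  proof
    assume "1 + x = 0" then have "x = -1" by (simp add: add_eq_0_iff)
    with assms show False by simp
  qed
  have e: "1 - x^2 = (1-x)*(1+x)" by (simp add: power2_eq_square algebra_simps)
  have "- (a * x / (1 - x)) + 2 * (a * x^2 / ((1 - x)*(1+x))) = (- (a*x) * (1+x) + 2*(a*x^2)) / ((1-x)*(1+x))"
  proof -
    have f1: "a * x / (1 - x) = (a*x*(1+x)) / ((1-x)*(1+x))" using h2 by simp
    have f2: "\<And>P Q D :: complex. - (P/D) + 2*(Q/D) = (-P + 2*Q)/D"
      by (simp add: add_divide_distrib diff_divide_distrib)
    show ?thesis unfolding f1 f2 by simp
  qed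
  also have "\<dots> = (a * (-x)) * (1 - x) / ((1-x)*(1+x))"
    by (simp add: algebra_simps power2_eq_square)
  also have "\<dots> = a * (-x) / (1 + x)" using h1 by simp
  finally show ?thesis unfolding e by simp
qed
lemma pow_facts:
  fixes q :: complex
  shows "(-q)^(2*n) = (q^2)^n" "q^(2*n) = (q^2)^n" "(q^2)^(2*n) = (q^4)^n"
    "(-q)^(2*n+1) = - (q^(2*n+1))" "(q^2)^(2*n+1) = (q^(2*n+1))^2"
    "(q^4)^n = (q^2)^(2*n)"
proof -
  show "(-q)^(2*n) = (q^2)^n" by (simp add: power_mult)
  show "q^(2*n) = (q^2)^n" by (simp add: power_mult)
  show "(q^2)^(2*n) = (q^4)^n" by (metis power_mult mult_2 numeral_Bit0)
  show "(-q)^(2*n+1) = - (q^(2*n+1))" by simp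
  show "(q^2)^(2*n+1) = (q^(2*n+1))^2" by (metis power_mult mult.commute)
  show "(q^4)^n = (q^2)^(2*n)" by (metis power_mult mult_2 numeral_Bit0)
qed
lemma nat_pow2: "(of_nat (2*n) :: complex) ^ s = 2^s * of_nat n ^ s"
  by (simp add: power_mult_distrib)
lemma norm_pow_lt1: "norm (q::complex) < 1 \<Longrightarrow> norm (q^m) < 1 \<or> m = 0"
  by (metis norm_ge_zero norm_power not_gr0 power_less_one_iff)
lemma TE_identity:
  fixes q :: complex
  assumes q: "norm q < 1"
  shows "(\<Sum>j. TE s (-q) (Suc j)) = - (\<Sum>j. TE s q (Suc j)) + (2*2^s+2) * (\<Sum>j. TE s (q^2) (Suc j))
           - 2 * 2^s * (\<Sum>j. TE s (q^4) (Suc j))"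
proof -
  have q2: "norm (q^2) < 1" "norm (q^4) < 1" "norm (-q) < 1" using q
    by (simp_all add: norm_power power_less_one_iff)
  note S = TE_summable[OF q] TE_summable[OF q2(1)] TE_summable[OF q2(2)] TE_summable[OF q2(3)]
  have DE: "TE s (-q) (2*n) = 2^s * TE s (q^2) n" for n
    unfolding TE_def pow_facts nat_pow2 by simp
  have AE: "TE s q (2*n) = 2^s * TE s (q^2) n" for n
    unfolding TE_def pow_facts nat_pow2 by simp
  have BE: "TE s (q^2) (2*n) = 2^s * TE s (q^4) n" for n
    unfolding TE_def pow_facts nat_pow2 by simp
  have DO: "TE s (-q) (2*n+1) = - TE s q (2*n+1) + 2 * TE s (q^2) (2*n+1)" for n
  proof -
    have x: "norm (q^(2*n+1)) < 1" using norm_pow_lt1[OF q, of "2*n+1"] by simp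
    show ?thesis unfolding TE_def pow_facts using lambert_id[OF x] by simp
  qed
  have main: "suminf (TE s (-q)) = - suminf (TE s q) + (2*2^s+2) * suminf (TE s (q^2)) - 2 * 2^s * suminf (TE s (q^4))"
    using split_main(2)[OF S(1) S(2) S(3) DE AE BE DO] by (simp add: algebra_simps)
  have z: "TE s r 0 = 0" for r by (simp add: TE_def)
  show ?thesis using main by (simp add: shift_sum[OF S(1) z] shift_sum[OF S(2) z] shift_sum[OF S(3) z] shift_sum[OF S(4) z])
qed


lemma TI_identity:
  fixes q :: complex
  assumes q: "norm q < 1" and p: "prime p" "2 < p"
  shows "(\<Sum>j. TI p s (-q) (Suc j)) = - (\<Sum>j. TI p s q (Suc j))
           + (2 * (of_real (chi p 2) * 2^s) + 2) * (\<Sum>j. TI p s (q^2) (Suc j))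
           - 2 * (of_real (chi p 2) * 2^s) * (\<Sum>j. TI p s (q^4) (Suc j))"
proof -
  have q2: "norm (q^2) < 1" "norm (q^4) < 1" "norm (-q) < 1" using q
    by (simp_all add: norm_power power_less_one_iff)
  note S = TI_summable[OF q] TI_summable[OF q2(1)] TI_summable[OF q2(2)] TI_summable[OF q2(3)]
  have ch: "chi p (int (2*n)) = chi p 2 * chi p (int n)" for n
    using chi_mult[OF p, of 2 "int n"] by simp
  have DE: "TI p s (-q) (2*n) = (of_real (chi p 2) * 2^s) * TI p s (q^2) n" for n
    unfolding TI_def pow_facts nat_pow2 ch by simp
  have AE: "TI p s q (2*n) = (of_real (chi p 2) * 2^s) * TI p s (q^2) n" for n
    unfolding TI_def pow_facts nat_pow2 ch by simp
  have BE: "TI p s (q^2) (2*n) = (of_real (chi p 2) * 2^s) * TI p s (q^4) n" for n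
    unfolding TI_def pow_facts nat_pow2 ch by simp
  have DO: "TI p s (-q) (2*n+1) = - TI p s q (2*n+1) + 2 * TI p s (q^2) (2*n+1)" for n
  proof -
    have x: "norm (q^(2*n+1)) < 1" using norm_pow_lt1[OF q, of "2*n+1"] by simp
    show ?thesis unfolding TI_def pow_facts using lambert_id[OF x] by simp
  qed
  have main: "suminf (TI p s (-q)) = - suminf (TI p s q)
      + (2 * (of_real (chi p 2) * 2^s) + 2) * suminf (TI p s (q^2))
      - 2 * (of_real (chi p 2) * 2^s) * suminf (TI p s (q^4))"
    using split_main(2)[OF S(1) S(2) S(3) DE AE BE DO] by (simp add: algebra_simps)
  have z: "TI p s r 0 = 0" for r by (simp add: TI_def)
  show ?thesis using main by (simp add: shift_sum[OF S(1) z] shift_sum[OF S(2) z] shift_sum[OF S(3) z] shift_sum[OF S(4) z])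
qed

lemma frac_id:
  fixes A B C u :: complex
  assumes h1: "1 - u \<noteq> 0" and h2: "1 + u \<noteq> 0" and k: "A * (1 - u) + B * (1 + u) = C"
  shows "A / (1 + u) = - (B / (1 - u)) + C / (1 - u^2)"
proof -
  have e: "1 - u^2 = (1-u)*(1+u)" by (simp add: power2_eq_square algebra_simps)
  have f1: "B / (1 - u) = (B*(1+u)) / ((1-u)*(1+u))" using h2 by simp
  have f2: "\<And>P Q D :: complex. - (P/D) + Q/D = (Q - P)/D"
    by (simp add: diff_divide_distrib)
  have "C - B*(1+u) = A * (1 - u)" using k by (simp add: algebra_simps)
  then have "- (B / (1 - u)) + C / (1 - u^2) = A * (1 - u) / ((1-u)*(1+u))"
    unfolding f1 e f2 by simp
  also have "\<dots> = A / (1 + u)" using h1 by simp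
  finally show ?thesis by simp
qed

lemma YY_identity:
  fixes x :: complex
  assumes x: "norm x < 1" and p: "prime p" "2 < p"
  shows "YY p (-x) = - YY p x + 2 * of_real (chi p 2) * YY p (x^2)"
proof -
  have oddp: "odd p" using p prime_odd_nat by auto
  have u: "norm (x^p) < 1" using norm_pow_lt1[OF x, of p] p by auto
  have h1: "1 - x^p \<noteq> 0"
  proof
    assume "1 - x^p = 0" then have "x^p = 1" by simp
    with u show False by simp
  qed
  have h2: "1 + x^p \<noteq> 0"
  proof
    assume "1 + x^p = 0" then have "x^p = -1" by (simp add: add_eq_0_iff)
    with u show False by simp
  qed
  have m: "(-x)^p = - (x^p)" using oddp by simp
  have m2: "(x^2)^p = (x^p)^2" by (metis power_mult mult.commute)
  have k: "(\<Sum>l=1..p-1. of_real (chi p (int l)) * (-x)^l) * (1 - x^p)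
         + (\<Sum>l=1..p-1. of_real (chi p (int l)) * x^l) * (1 + x^p)
       = 2 * of_real (chi p 2) * (\<Sum>l=1..p-1. of_real (chi p (int l)) * (x^2)^l)"
    by (rule key_sum[OF p])
  show ?thesis
    unfolding YY_def m m2 using frac_id[OF h1 h2 k] by (simp add: mult.assoc)
qed

lemma T0_identity:
  fixes q :: complex
  assumes q: "norm q < 1" and p: "prime p" "2 < p"
  shows "(\<Sum>j. T0 p s (-q) (Suc j)) = - (\<Sum>j. T0 p s q (Suc j))
           + (2 * 2^s + 2 * of_real (chi p 2)) * (\<Sum>j. T0 p s (q^2) (Suc j))
           - 2 * of_real (chi p 2) * 2^s * (\<Sum>j. T0 p s (q^4) (Suc j))"
proof -
  have q2: "norm (q^2) < 1" "norm (q^4) < 1" "norm (-q) < 1" using q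
    by (simp_all add: norm_power power_less_one_iff)
  have p1: "p \<ge> 1" using p by simp
  note S = T0_summable[OF q p1] T0_summable[OF q2(1) p1] T0_summable[OF q2(2) p1] T0_summable[OF q2(3) p1]
  have DE: "T0 p s (-q) (2*n) = 2^s * T0 p s (q^2) n" for n
    unfolding T0_YY pow_facts nat_pow2 by simp
  have AE: "T0 p s q (2*n) = 2^s * T0 p s (q^2) n" for n
    unfolding T0_YY pow_facts nat_pow2 by simp
  have BE: "T0 p s (q^2) (2*n) = 2^s * T0 p s (q^4) n" for n
    unfolding T0_YY pow_facts nat_pow2 by simp
  have DO: "T0 p s (-q) (2*n+1) = - T0 p s q (2*n+1) + (2 * of_real (chi p 2)) * T0 p s (q^2) (2*n+1)" for n
  proof -
    have x: "norm (q^(2*n+1)) < 1" using norm_pow_lt1[OF q, of "2*n+1"] by simp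
    show ?thesis unfolding T0_YY pow_facts YY_identity[OF x p] by (simp add: algebra_simps)
  qed
  have main: "suminf (T0 p s (-q)) = - suminf (T0 p s q)
      + (2 * 2^s + 2 * of_real (chi p 2)) * suminf (T0 p s (q^2))
      - 2 * of_real (chi p 2) * 2^s * suminf (T0 p s (q^4))"
    using split_main(2)[OF S(1) S(2) S(3) DE AE BE DO] by (simp add: algebra_simps)
  have z: "T0 p s r 0 = 0" for r by (simp add: T0_def)
  show ?thesis using main by (simp add: shift_sum[OF S(1) z] shift_sum[OF S(2) z] shift_sum[OF S(3) z] shift_sum[OF S(4) z])
qed


lemma qq_half: "qq (\<tau> + 1/2) = - qq \<tau>"
proof -
  have "2 * of_real pi * \<i> * (\<tau> + 1/2) = 2 * of_real pi * \<i> * \<tau> + of_real pi * \<i>"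
    by (simp add: algebra_simps)
  then show ?thesis unfolding qq_def by (simp add: exp_add)
qed

lemma qq_mult: "qq (of_nat m * \<tau>) = qq \<tau> ^ m"
proof -
  have "2 * of_real pi * \<i> * (of_nat m * \<tau>) = of_nat m * (2 * of_real pi * \<i> * \<tau>)"
    by (simp add: algebra_simps)
  then show ?thesis unfolding qq_def by (metis exp_of_nat_mult)
qed

lemma qq_2: "qq (2 * \<tau>) = qq \<tau> ^ 2" using qq_mult[of 2 \<tau>] by simp
lemma qq_4: "qq (4 * \<tau>) = qq \<tau> ^ 4" using qq_mult[of 4 \<tau>] by simp

lemma qq_norm: "Im \<tau> > 0 \<Longrightarrow> norm (qq \<tau>) < 1"
  unfolding qq_def by simp

lemma eis_gen:
  assumes t: "Im \<tau> > 0" and w: "w \<ge> 1"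
  shows "eis w (\<tau> + 1/2) = - eis w \<tau> + (2 * 2^(w-1) + 2) * eis w (2*\<tau>) - 2 * 2^(w-1) * eis w (4*\<tau>)"
proof -
  define K where "K = 2 * of_nat w / complex_of_real (bern w)"
  define L where "L = (\<lambda>r. \<Sum>j. TE (w-1) r (Suc j))"
  have e: "eis w \<sigma> = 1 - K * L (qq \<sigma>)" for \<sigma> unfolding eis_def K_def L_def TE_def by simp
  have id: "L (- qq \<tau>) = - L (qq \<tau>) + (2*2^(w-1)+2) * L (qq \<tau> ^ 2) - 2 * 2^(w-1) * L (qq \<tau> ^ 4)"
    unfolding L_def by (rule TE_identity[OF qq_norm[OF t]])
  show ?thesis unfolding e qq_half qq_2 qq_4 id by (simp add: algebra_simps)
qed

lemma eisinf_gen: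
  assumes t: "Im \<tau> > 0" and p: "prime p" "2 < p"
  shows "eisinf p k (\<tau> + 1/2) = - eisinf p k \<tau> + (2 * (of_real (chi p 2) * 2^(k-1)) + 2) * eisinf p k (2*\<tau>)
     - 2 * (of_real (chi p 2) * 2^(k-1)) * eisinf p k (4*\<tau>)"
proof -
  define K where "K = 2 * of_nat k / complex_of_real (bern_chi k p)"
  define L where "L = (\<lambda>r. \<Sum>j. TI p (k-1) r (Suc j))"
  have e: "eisinf p k \<sigma> = 1 - K * L (qq \<sigma>)" for \<sigma> unfolding eisinf_def K_def L_def TI_def by simp
  have id: "L (- qq \<tau>) = - L (qq \<tau>) + (2 * (of_real (chi p 2) * 2^(k-1)) + 2) * L (qq \<tau> ^ 2)
     - 2 * (of_real (chi p 2) * 2^(k-1)) * L (qq \<tau> ^ 4)"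
    unfolding L_def by (rule TI_identity[OF qq_norm[OF t] p])
  show ?thesis unfolding e qq_half qq_2 qq_4 id by (simp add: algebra_simps)
qed

lemma eis0_gen:
  assumes t: "Im \<tau> > 0" and p: "prime p" "2 < p"
  shows "eis0 p k (\<tau> + 1/2) = - eis0 p k \<tau> + (2 * 2^(k-1) + 2 * of_real (chi p 2)) * eis0 p k (2*\<tau>)
     - 2 * of_real (chi p 2) * 2^(k-1) * eis0 p k (4*\<tau>)"
proof -
  define K where "K = 2 * of_nat k / complex_of_real (bern_chi k p)"
  define L where "L = (\<lambda>r. \<Sum>j. T0 p (k-1) r (Suc j))"
  define \<delta> :: complex where "\<delta> = (if k = 1 then 1 else 0)"
  define a :: complex where "a = 2 * 2^(k-1) + 2 * of_real (chi p 2)"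
  define b :: complex where "b = 2 * of_real (chi p 2) * 2^(k-1)"
  have e: "eis0 p k \<sigma> = \<delta> - K * L (qq \<sigma>)" for \<sigma> unfolding eis0_def K_def L_def T0_def \<delta>_def by simp
  have id: "L (- qq \<tau>) = - L (qq \<tau>) + a * L (qq \<tau> ^ 2) - b * L (qq \<tau> ^ 4)"
    unfolding L_def a_def b_def by (rule T0_identity[OF qq_norm[OF t] p])
  have d: "\<delta> * (2 - a + b) = 0" unfolding \<delta>_def a_def b_def by simp
  have r: "- (\<delta> - K * L (qq \<tau>)) + a * (\<delta> - K * L (qq \<tau> ^ 2)) - b * (\<delta> - K * L (qq \<tau> ^ 4))
     = (\<delta> - K * (- L (qq \<tau>) + a * L (qq \<tau> ^ 2) - b * L (qq \<tau> ^ 4))) - \<delta> * (2 - a + b)"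
    by (simp add: algebra_simps)
  show ?thesis unfolding e qq_half qq_2 qq_4 id a_def[symmetric] b_def[symmetric] r d by simp
qed

theorem lemma3p2:
  fixes \<tau> :: complex
  assumes "Im \<tau> > 0"
  shows "(\<forall>k::nat. k \<ge> 1 \<longrightarrow>
            eis (2*k) (\<tau> + 1/2) = - eis (2*k) \<tau> + (2 ^ (2*k) + 2) * eis (2*k) (2*\<tau>)
                                   - 2 ^ (2*k) * eis (2*k) (4*\<tau>))
       \<and> (\<forall>p\<in>{3, 11::nat}. \<forall>k::nat.
            eis0 p (2*k+1) (\<tau> + 1/2) = - eis0 p (2*k+1) \<tau>
               + (2 ^ (2*k+1) - 2) * eis0 p (2*k+1) (2*\<tau>) + 2 ^ (2*k+1) * eis0 p (2*k+1) (4*\<tau>)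
          \<and> eisinf p (2*k+1) (\<tau> + 1/2) = - eisinf p (2*k+1) \<tau>
               + (2 - 2 ^ (2*k+1)) * eisinf p (2*k+1) (2*\<tau>) + 2 ^ (2*k+1) * eisinf p (2*k+1) (4*\<tau>))
       \<and> (\<forall>p\<in>{7, 23::nat}. \<forall>k::nat.
            eis0 p (2*k+1) (\<tau> + 1/2) = - eis0 p (2*k+1) \<tau>
               + (2 ^ (2*k+1) + 2) * eis0 p (2*k+1) (2*\<tau>) - 2 ^ (2*k+1) * eis0 p (2*k+1) (4*\<tau>)
          \<and> eisinf p (2*k+1) (\<tau> + 1/2) = - eisinf p (2*k+1) \<tau>
               + (2 ^ (2*k+1) + 2) * eisinf p (2*k+1) (2*\<tau>) - 2 ^ (2*k+1) * eisinf p (2*k+1) (4*\<tau>))"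
proof (intro conjI ballI allI impI)
  fix k :: nat assume k: "k \<ge> 1"
  have c: "(2::complex) * 2 ^ (2*k - 1) = 2 ^ (2*k)"
  proof -
    have "2*k = Suc (2*k - 1)" using k by simp
    then show ?thesis by (metis power_Suc)
  qed
  show "eis (2*k) (\<tau> + 1/2) = - eis (2*k) \<tau> + (2 ^ (2*k) + 2) * eis (2*k) (2*\<tau>)
                                   - 2 ^ (2*k) * eis (2*k) (4*\<tau>)"
    using eis_gen[OF assms, of "2*k"] k unfolding c by simp
next
  fix p k :: nat assume p: "p \<in> {3, 11}"
  have pp: "prime p" "2 < p" "chi p 2 = -1" using p prime3 prime11 chi2_vals by auto
  have c: "(2::complex) * 2 ^ (2*k) = 2 ^ (2*k+1)" by simp
  show "eis0 p (2*k+1) (\<tau> + 1/2) = - eis0 p (2*k+1) \<tau>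
               + (2 ^ (2*k+1) - 2) * eis0 p (2*k+1) (2*\<tau>) + 2 ^ (2*k+1) * eis0 p (2*k+1) (4*\<tau>)"
    using eis0_gen[OF assms pp(1,2), of "2*k+1"] unfolding pp(3) by (simp add: c algebra_simps)
  show "eisinf p (2*k+1) (\<tau> + 1/2) = - eisinf p (2*k+1) \<tau>
               + (2 - 2 ^ (2*k+1)) * eisinf p (2*k+1) (2*\<tau>) + 2 ^ (2*k+1) * eisinf p (2*k+1) (4*\<tau>)"
    using eisinf_gen[OF assms pp(1,2), of "2*k+1"] unfolding pp(3) by (simp add: c algebra_simps)
next
  fix p k :: nat assume p: "p \<in> {7, 23}"
  have pp: "prime p" "2 < p" "chi p 2 = 1" using p prime7 prime23 chi2_vals by auto
  have c: "(2::complex) * 2 ^ (2*k) = 2 ^ (2*k+1)" by simp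
  show "eis0 p (2*k+1) (\<tau> + 1/2) = - eis0 p (2*k+1) \<tau>
               + (2 ^ (2*k+1) + 2) * eis0 p (2*k+1) (2*\<tau>) - 2 ^ (2*k+1) * eis0 p (2*k+1) (4*\<tau>)"
    using eis0_gen[OF assms pp(1,2), of "2*k+1"] unfolding pp(3) by (simp add: c algebra_simps)
  show "eisinf p (2*k+1) (\<tau> + 1/2) = - eisinf p (2*k+1) \<tau>
               + (2 ^ (2*k+1) + 2) * eisinf p (2*k+1) (2*\<tau>) - 2 ^ (2*k+1) * eisinf p (2*k+1) (4*\<tau>)"
    using eisinf_gen[OF assms pp(1,2), of "2*k+1"] unfolding pp(3) by (simp add: c algebra_simps)
qed

end
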